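(* Fix $\alpha>0$ and $N\ge1$. For $u\in\mathbb{R}$ define the polynomial $P_u:\mathbb{R}^N\to\mathbb{R}$ by $$P_u(v)=-\alpha\left(\frac{|v|^2}{2}-\frac{|v|^4}{4}\right)+\frac{|v|^2}{2}-u v_1,$$ where $v=(v_1,\dots,v_N)$. For every $u>0$ the polynomial $P_u$ attains its global minimum only at the point $v^*(u)=(v_1^*(u),0,\dots,0)$, where $v_1^*(u)$ is a continuous function of $u>0$, is positive for $u>0$, and satisfies $v_1^*(1)=1$. *)

theory Defs
  imports "HOL-Analysis.Analysis"
begin

text \<open>The polynomial P_u on R^N (N = CARD('n)); the coordinate v_1 is the component
  at a distinguished index i1.\<close>
definition P :: "real \<Rightarrow> 'n::finite \<Rightarrow> real \<Rightarrow> real ^ 'n \<Rightarrow> real" where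
  "P \<alpha> i1 u v = - \<alpha> * ((norm v)^2 / 2 - (norm v)^4 / 4) + (norm v)^2 / 2 - u * (v $ i1)"

end

theory Submission
  imports Defs
begin

definition gg :: "real \<Rightarrow> real \<Rightarrow> real" where
  "gg a t = a * t ^ 3 + (1-a)*t"

lemma gg_uniq:
  assumes "a > 0" "x > 0" "y > 0" "gg a x = gg a y" "gg a x > 0"
  shows "x = y"
proof (rule ccontr)
  assume ne: "x \<noteq> y"
  have "gg a x - gg a y = (x - y) * (a*(x^2+x*y+y^2) + 1 - a)"
    unfolding gg_def by (simp add: algebra_simps power2_eq_square power3_eq_cube)
  with assms(4) ne have e: "a*(x^2+x*y+y^2) + 1 - a = 0" by simp
  have "x * (a*x^2 + 1 - a) > 0" using assms(5) unfolding gg_def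
    by (simp add: algebra_simps power2_eq_square power3_eq_cube)
  hence h1: "a*x^2 + 1 - a > 0" using assms(2) by (simp add: zero_less_mult_iff)
  have "a*(x*y+y^2) > 0" using assms by (intro mult_pos_pos add_pos_pos) (auto simp: power2_eq_square)
  with h1 e show False by (simp add: algebra_simps)
qed

lemma gg_exists:
  assumes "a > 0" "u > 0"
  shows "\<exists>s>0. gg a s = u"
proof -
  have c: "continuous_on {0..1+u} (gg a)" unfolding gg_def by (intro continuous_intros)
  have "gg a (1+u) = (1+u) * (a*((1+u)^2 - 1) + 1)"
    unfolding gg_def by (simp add: algebra_simps power2_eq_square power3_eq_cube)
  moreover have "(1+u)^2 - 1 \<ge> 0" using assms by (simp add: power2_eq_square algebra_simps)
  moreover have "a*((1+u)^2 - 1) \<ge> 0" using assms calculation(2) by simp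
  ultimately have "gg a (1+u) \<ge> 1+u" using assms
    by (simp add: mult_le_cancel_left1)
  hence "u \<le> gg a (1+u)" by simp
  moreover have "gg a 0 \<le> u" using assms unfolding gg_def by simp
  ultimately obtain s where "0 \<le> s" "s \<le> 1+u" "gg a s = u"
    using IVT'[OF _ _ _ c] assms by fastforce
  moreover have "s \<noteq> 0" using \<open>gg a s = u\<close> assms unfolding gg_def by auto
  ultimately have "s > 0 \<and> gg a s = u" by auto
  thus ?thesis by blast
qed

definition vv :: "real \<Rightarrow> real \<Rightarrow> real" where
  "vv a u = (THE s. s > 0 \<and> gg a s = u)"

lemma vv_prop:
  assumes "a > 0" "u > 0"
  shows "vv a u > 0 \<and> gg a (vv a u) = u"
proof -
  obtain s where s: "s > 0" "gg a s = u" using gg_exists assms by blast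
  have "s > 0 \<and> gg a s = u" using s by simp
  moreover have "\<And>t. t > 0 \<and> gg a t = u \<Longrightarrow> t = s"
    using gg_uniq[OF assms(1)] s assms(2) by metis
  ultimately have "vv a u = s" unfolding vv_def by (rule the_equality)
  thus ?thesis using s by simp
qed

lemma vv_inv:
  assumes "a > 0" "z > 0" "gg a z > 0"
  shows "vv a (gg a z) = z"
  using vv_prop[OF assms(1) assms(3)] gg_uniq[OF assms(1) _ assms(2)] assms by metis

lemma vv_cont:
  assumes "a > 0" "u > 0"
  shows "isCont (vv a) u"
proof -
  define x where "x = vv a u"
  have x: "x > 0" "gg a x = u" using vv_prop[OF assms] x_def by auto
  define S where "S = {z. 0 < z \<and> 0 < gg a z}"
  have cg: "continuous_on UNIV (gg a)" unfolding gg_def by (intro continuous_intros)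
  have "open S" unfolding S_def
    by (intro open_Collect_conj open_Collect_less continuous_intros cg)
  moreover have "x \<in> S" using x assms S_def by auto
  ultimately obtain e where e: "e > 0" "cball x e \<subseteq> S" using open_contains_cball by blast
  have "isCont (vv a) (gg a x)"
  proof (rule isCont_inverse_function[where f="gg a" and x=x, OF e(1)])
    fix z assume "\<bar>z - x\<bar> \<le> e"
    hence "z \<in> S" using e(2) by (auto simp: cball_def dist_real_def abs_minus_commute)
    thus "vv a (gg a z) = z" using vv_inv assms S_def by auto
  next
    fix z show "isCont (gg a) z" unfolding gg_def by (intro continuous_intros)
  qed
  thus ?thesis using x by simp
qed

lemma f_ineq:
  fixes a s t u :: real
  assumes "a > 0" "s > 0" "gg a s = u" "u > 0"
  shows "a * t ^ 4/4 + (1-a) * t ^ 2/2 - u*t - (a * s ^ 4/4 + (1-a) * s ^ 2/2 - u * s)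
     = (t-s)^2 * (a/4*(t+s)^2 + (a * s ^ 2+1-a)/2)"
    and "a * s ^ 2+1-a > 0"
proof -
  show "a * t ^ 4/4 + (1-a) * t ^ 2/2 - u*t - (a * s ^ 4/4 + (1-a) * s ^ 2/2 - u * s)
     = (t-s)^2 * (a/4*(t+s)^2 + (a * s ^ 2+1-a)/2)"
  proof -
    have ue: "u = a * s^3 + (1-a) * s" using assms(3) unfolding gg_def by simp
    show ?thesis unfolding ue by (simp add: field_simps power2_eq_square power3_eq_cube power4_eq_xxxx) 
  qed
  have "s * (a * s ^ 2 + 1 - a) > 0" using assms(3,4) unfolding gg_def
    by (simp add: algebra_simps power2_eq_square power3_eq_cube)
  thus "a * s ^ 2+1-a > 0" using assms(2) by (simp add: zero_less_mult_iff)
qed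

lemma f_min:
  fixes a s t u :: real
  assumes "a > 0" "s > 0" "gg a s = u" "u > 0"
  shows "a * t ^ 4/4 + (1-a) * t ^ 2/2 - u*t \<ge> a * s ^ 4/4 + (1-a) * s ^ 2/2 - u * s"
    and "a * t ^ 4/4 + (1-a) * t ^ 2/2 - u*t = a * s ^ 4/4 + (1-a) * s ^ 2/2 - u * s \<Longrightarrow> t = s"
proof -
  note f = f_ineq(1)[OF assms, of t] f_ineq(2)[OF assms]
  have q: "a/4*(t+s)^2 + (a * s ^ 2+1-a)/2 > 0" using f(2) assms(1)
    by (simp add: add_nonneg_pos)
  have "(t-s)^2 * (a/4*(t+s)^2 + (a * s ^ 2+1-a)/2) \<ge> 0" using q by simp
  thus "a * t ^ 4/4 + (1-a) * t ^ 2/2 - u*t \<ge> a * s ^ 4/4 + (1-a) * s ^ 2/2 - u * s" using f(1) by linarith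
  assume "a * t ^ 4/4 + (1-a) * t ^ 2/2 - u*t = a * s ^ 4/4 + (1-a) * s ^ 2/2 - u * s"
  hence "(t-s)^2 * (a/4*(t+s)^2 + (a * s ^ 2+1-a)/2) = 0" using f(1) by linarith
  thus "t = s" using q by simp
qed

lemma P_alt: "P a i u v = a*(norm v)^4/4 + (1-a)*(norm v)^2/2 - u*(v$i)"
  unfolding P_def by (simp add: field_simps)

lemma norm_sq_split:
  fixes v :: "real ^ 'n::finite"
  shows "(norm v)^2 = (v$i)^2 + (\<Sum>j\<in>UNIV-{i}. (v$j)^2)"
proof -
  have "(norm v)^2 = inner v v" by (rule power2_norm_eq_inner)
  also have "\<dots> = (\<Sum>j\<in>UNIV. (v$j)^2)"
    by (simp add: inner_vec_def power2_eq_square)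
  also have "\<dots> = (v$i)^2 + (\<Sum>j\<in>UNIV-{i}. (v$j)^2)"
    by (simp add: sum.remove[of UNIV i])
  finally show ?thesis .
qed

lemma comp_le_norm:
  fixes v :: "real ^ 'n::finite"
  shows "v$i \<le> norm v"
  using component_le_norm_cart[of v i] by simp

lemma comp_eq_norm:
  fixes v :: "real ^ 'n::finite"
  assumes "v$i = norm v"
  shows "v = axis i (norm v)"
proof -
  have "(\<Sum>j\<in>UNIV-{i}. (v$j)^2) = 0" using norm_sq_split[of v i] assms by simp
  hence "\<forall>j\<in>UNIV-{i}. (v$j)^2 = 0" by (subst (asm) sum_nonneg_eq_0_iff) auto
  hence "\<And>j. j \<noteq> i \<Longrightarrow> v$j = 0" by auto
  thus ?thesis using assms by (auto simp: vec_eq_iff axis_def)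
qed

theorem lemma2p7:
  fixes \<alpha> :: real and i1 :: "'n::finite"
  assumes "\<alpha> > 0"
  shows "\<exists>v1 :: real \<Rightarrow> real.
           continuous_on {0<..} v1 \<and> (\<forall>u>0. v1 u > 0) \<and> v1 1 = 1 \<and>
           (\<forall>u>0. {v :: real ^ 'n. \<forall>w. P \<alpha> i1 u v \<le> P \<alpha> i1 u w} = {axis i1 (v1 u)})"
proof (intro exI[of _ "vv \<alpha>"] conjI allI impI)
  show "continuous_on {0<..} (vv \<alpha>)"
    using vv_cont[OF assms] by (intro continuous_at_imp_continuous_on) auto
  show "\<And>u. u > 0 \<Longrightarrow> vv \<alpha> u > 0" using vv_prop[OF assms] by blast
  show "vv \<alpha> 1 = 1" using vv_inv[OF assms, of 1] by (simp add: gg_def)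
next
  fix u :: real assume u: "u > 0"
  define s where "s = vv \<alpha> u"
  have s: "s > 0" "gg \<alpha> s = u" using vv_prop[OF assms u] s_def by auto
  let ?f = "\<lambda>t. \<alpha> * t ^ 4/4 + (1-\<alpha>) * t ^ 2/2 - u*t"
  have Pax: "P \<alpha> i1 u (axis i1 s) = ?f s" using s
  proof -
    have "axis i1 s = s *\<^sub>R axis i1 1" by (simp add: vec_eq_iff axis_def)
    hence "norm (axis i1 s) = s" using s by simp
    thus ?thesis by (simp add: P_alt)
  qed
  have low: "P \<alpha> i1 u w \<ge> ?f (norm w) + u*(norm w - w$i1)" for w :: "real ^ 'n"
    by (simp add: P_alt algebra_simps)
  have nn: "u*(norm w - w$i1) \<ge> 0" for w :: "real ^ 'n"
    using comp_le_norm[of w i1] u by simp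
  have ge: "P \<alpha> i1 u w \<ge> ?f s" for w :: "real ^ 'n"
    using low[of w] nn[of w] f_min(1)[OF assms s u, of "norm w"] by linarith
  show "{v :: real ^ 'n. \<forall>w. P \<alpha> i1 u v \<le> P \<alpha> i1 u w} = {axis i1 (vv \<alpha> u)}"
  proof (intro set_eqI iffI)
    fix v :: "real ^ 'n" assume "v \<in> {v. \<forall>w. P \<alpha> i1 u v \<le> P \<alpha> i1 u w}"
    hence "P \<alpha> i1 u v \<le> ?f s" using Pax by (metis mem_Collect_eq)
    hence le: "?f (norm v) + u*(norm v - v$i1) \<le> ?f s" using low[of v] by linarith
    have f1: "?f (norm v) \<ge> ?f s" using f_min(1)[OF assms s u] .
    have "?f (norm v) = ?f s" using le f1 nn[of v] by linarith
    hence ns: "norm v = s" using f_min(2)[OF assms s u] by blast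
    have "u*(norm v - v$i1) = 0" using le f1 nn[of v] by linarith
    hence "v$i1 = norm v" using u by simp
    hence "v = axis i1 (norm v)" by (rule comp_eq_norm)
    thus "v \<in> {axis i1 (vv \<alpha> u)}" using ns s_def by simp
  next
    fix v :: "real ^ 'n" assume "v \<in> {axis i1 (vv \<alpha> u)}"
    hence "v = axis i1 s" using s_def by simp
    thus "v \<in> {v. \<forall>w. P \<alpha> i1 u v \<le> P \<alpha> i1 u w}" using Pax ge by simp
  qed
qed

end
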